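(* Let $v:\mathbb{R}^n\to\mathbb{R}$ be a function (the output of a neural network), let $\boldsymbol{x}=[x_1,\dots,x_n]^T\in\mathbb{R}^n$, let $\boldsymbol{\mu}=[\mu_1,\dots,\mu_n]^T\in\mathbb{R}^n$ with $x_i\neq\mu_i$ for all $i$, and let $\tau>0$. Define the baseline point $\boldsymbol{b}=[b_1,\dots,b_n]^T$ by $b_i=x_i+\tau$ if $x_i<\mu_i$ and $b_i=x_i-\tau$ if $x_i>\mu_i$. Assume $v$ equals its (multivariate) Taylor series expanded at $\boldsymbol{b}$, i.e. for every $\boldsymbol{z}\in\mathbb{R}^n$, $$v(\boldsymbol{z})=\sum_{\boldsymbol{\kappa}\in\mathbb{N}^n} C(\boldsymbol{\kappa})\,\nabla_v(\boldsymbol{\kappa})\,\prod_{i=1}^n (z_i-b_i)^{\kappa_i},$$ where $C(\boldsymbol{\kappa})=\frac{1}{(\kappa_1+\dots+\kappa_n)!}\binom{\kappa_1+\dots+\kappa_n}{\kappa_1,\dots,\kappa_n}$ and $\nabla_v(\boldsymbol{\kappa})=\frac{\partial^{\kappa_1+\dots+\kappa_n}v(\boldsymbol{b})}{\partial^{\kappa_1}x_1\cdots\partial^{\kappa_n}x_n}$. Let $\boldsymbol{\epsilon}\sim\mathcal{N}(\boldsymbol{0},\delta^2\boldsymbol{I})$ and $\boldsymbol{x}'=\boldsymbol{x}+\boldsymbol{\epsilon}$. Let $N=\{1,\dots,n\}$; for $T\subseteq N$ let $\boldsymbol{x}'_T\in\mathbb{R}^n$ be given by $(\boldsymbol{x}'_T)_i=x'_i$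 if $i\in T$ and $(\boldsymbol{x}'_T)_i=b_i$ if $i\notin T$; and for $S\subseteq N$ let $I(S\mid\boldsymbol{x}')=\sum_{T\subseteq S}(-1)^{|S|-|T|}v(\boldsymbol{x}'_T)$. For $\boldsymbol{\kappa}\in\mathbb{N}^n$ let $\pi(\boldsymbol{\kappa}\mid\boldsymbol{x}')=\prod_{i=1}^n(x'_i-b_i)^{\kappa_i}$, $\hat\pi(\boldsymbol{\kappa}\mid\boldsymbol{x}')=\prod_{i=1}^n\big(\frac{\operatorname{sign}(x_i-b_i)}{\tau}\big)^{\kappa_i}\pi(\boldsymbol{\kappa}\mid\boldsymbol{x}')$ and $Z(\boldsymbol{\kappa})=\prod_{i=1}^n\big(\frac{\tau}{\operatorname{sign}(x_i-b_i)}\big)^{\kappa_i}C(\boldsymbol{\kappa})\nabla_v(\boldsymbol{\kappa})$. For $S\subseteq N$ let $Q_S=\{\boldsymbol{\kappa}\in\mathbb{N}^n : \kappa_i\geq 1\ \forall i\in S,\ \kappa_i=0\ \forall i\notin S\}$. Then for every $S\subseteq N$ (and every realization of $\boldsymbol{\epsilon}$), $$I(S\mid\boldsymbol{x}')=\sum_{\boldsymbol{\kappa}\in Q_S}C(\boldsymbol{\kappa})\nabla_v(\boldsymbol{\kappa})\pi(\boldsymbol{\kappa}\mid\boldsymbol{x}')=\sum_{\boldsymbol{\kappa}\in Q_S}Z(\boldsymbol{\kappa})\hat\pi(\boldsymbol{\kappa}\mid\boldsymbol{x}');$$ for every $\boldsymbol{\kappa}\in Q_S$, $\mathbb{E}_{\boldsymbol{\epsilon}}[\hat\pi(\boldsymbol{\kappa}\mid\boldsymbol{x}+\boldsymbol{\epsilon})]=1+O(\delta^2)$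 as $\delta\to0$; and for every $\boldsymbol{\kappa}\in Q_S$, $$\mathbb{E}_{\boldsymbol{\epsilon}}[\hat\pi^2(\boldsymbol{\kappa}\mid\boldsymbol{x}+\boldsymbol{\epsilon})]=\prod_{i\in S}\Big[1+\sum_{m=1}^{\kappa_i}c_m V_{2m}(\epsilon_i)\Big],$$ where $V_{2m}(\epsilon_i)=\mathbb{E}[\epsilon_i^{2m}]>0$ and $c_m=\binom{2\kappa_i}{2m}\frac{1}{\tau^{2m}}>0$.
   Context: $\mathbb{N}=\{0,1,2,\dots\}$ and $\mathbb{N}^+=\{1,2,\dots\}$. $I(S\mid\boldsymbol{x}')$ is the Harsanyi dividend (interaction effect) of the set $S$ of input variables, where a masked variable is replaced by its baseline value $b_i$. $\operatorname{sign}(x_i-b_i)\in\{+1,-1\}$ (nonzero since $|x_i-b_i|=\tau$). The components $\epsilon_1,\dots,\epsilon_n$ are independent $\mathcal{N}(0,\delta^2)$ variables. *)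

theory Defs
  imports "HOL-Probability.Probability" "HOL-Library.Landau_Symbols"
begin

definition partial_i :: "'n::finite \<Rightarrow> (real^'n \<Rightarrow> real) \<Rightarrow> real^'n \<Rightarrow> real" where
  "partial_i i f z = deriv (\<lambda>t. f (\<chi> j. if j = i then t else z $ j)) (z $ i)"

text \<open>Mixed partial derivative of order kappa, evaluated at b; coordinates are
  differentiated in an (arbitrary) fixed enumeration order of the index type.\<close>
definition nabla :: "(real^'n::finite \<Rightarrow> real) \<Rightarrow> real^'n \<Rightarrow> ('n \<Rightarrow> nat) \<Rightarrow> real" where
  "nabla f b kappa =
     foldr (\<lambda>i g. (partial_i i ^^ kappa i) g)
           (SOME l. distinct l \<and> set l = (UNIV :: 'n set)) f b"

definition Ccoef :: "('n::finite \<Rightarrow> nat) \<Rightarrow> real" where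
  "Ccoef kappa = 1 / fact (\<Sum>i\<in>UNIV. kappa i) *
                 (fact (\<Sum>i\<in>UNIV. kappa i) / (\<Prod>i\<in>UNIV. fact (kappa i)))"

definition baseline :: "real^'n::finite \<Rightarrow> real^'n \<Rightarrow> real \<Rightarrow> real^'n" where
  "baseline x mu tau = (\<chi> i. if x $ i < mu $ i then x $ i + tau else x $ i - tau)"

definition masked :: "real^'n::finite \<Rightarrow> real^'n \<Rightarrow> 'n set \<Rightarrow> real^'n" where
  "masked x' b T = (\<chi> i. if i \<in> T then x' $ i else b $ i)"

definition harsanyi :: "(real^'n::finite \<Rightarrow> real) \<Rightarrow> real^'n \<Rightarrow> real^'n \<Rightarrow> 'n set \<Rightarrow> real" where
  "harsanyi v b x' S = (\<Sum>T\<in>Pow S. (-1) ^ (card S - card T) * v (masked x' b T))"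

definition pi_mon :: "real^'n::finite \<Rightarrow> real^'n \<Rightarrow> ('n \<Rightarrow> nat) \<Rightarrow> real" where
  "pi_mon b x' kappa = (\<Prod>i\<in>UNIV. (x' $ i - b $ i) ^ kappa i)"

definition pihat :: "real^'n::finite \<Rightarrow> real^'n \<Rightarrow> real \<Rightarrow> real^'n \<Rightarrow> ('n \<Rightarrow> nat) \<Rightarrow> real" where
  "pihat x b tau x' kappa =
     (\<Prod>i\<in>UNIV. (sgn (x $ i - b $ i) / tau) ^ kappa i) * pi_mon b x' kappa"

definition Zcoef :: "(real^'n::finite \<Rightarrow> real) \<Rightarrow> real^'n \<Rightarrow> real^'n \<Rightarrow> real \<Rightarrow> ('n \<Rightarrow> nat) \<Rightarrow> real" where
  "Zcoef v x b tau kappa =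
     (\<Prod>i\<in>UNIV. (tau / sgn (x $ i - b $ i)) ^ kappa i) * Ccoef kappa * nabla v b kappa"

definition Qset :: "'n::finite set \<Rightarrow> ('n \<Rightarrow> nat) set" where
  "Qset S = {kappa. (\<forall>i\<in>S. 1 \<le> kappa i) \<and> (\<forall>i. i \<notin> S \<longrightarrow> kappa i = 0)}"

definition gauss_expect :: "real \<Rightarrow> (real^'n::finite \<Rightarrow> real) \<Rightarrow> real" where
  "gauss_expect delta f =
     (LINT e|lborel. (\<Prod>i\<in>UNIV. normal_density 0 delta (e $ i)) * f e)"

definition gauss_moment :: "real \<Rightarrow> nat \<Rightarrow> real" where
  "gauss_moment delta k = (LINT t|lborel. normal_density 0 delta t * t ^ k)"

end

theory Submission
  imports Defs
begin


lemma has_sum_sum_fin: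
  fixes g :: "'b \<Rightarrow> 'a \<Rightarrow> real"
  assumes "finite A" "\<And>T. T \<in> A \<Longrightarrow> (g T has_sum s T) B"
  shows "((\<lambda>k. \<Sum>T\<in>A. g T k) has_sum (\<Sum>T\<in>A. s T)) B"
  using assms
proof (induction A rule: finite_induct)
  case empty
  then show ?case by simp
next
  case (insert a F)
  then show ?case by (simp add: has_sum_add)
qed

lemma mobius_indicator:
  fixes K S :: "'a set"
  assumes "finite S"
  shows "(\<Sum>T\<in>Pow S. (-1) ^ (card S - card T) * (if K \<subseteq> T then 1 else 0)) = (if S = K then 1 else (0::real))"
proof -
  have "(\<lambda>U. if U = K then 1 else (0::real)) S = (\<Sum>T \<in> Pow S. (-1) ^ (card S - card T) * (\<lambda>S. if K \<subseteq> S then 1 else 0) T)"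
  proof (rule inclusion_exclusion_mobius[OF _ assms])
    fix S :: "'a set" assume "finite S"
    show "(if K \<subseteq> S then 1 else 0) = sum (\<lambda>U. if U = K then 1 else (0::real)) (Pow S)"
      using \<open>finite S\<close> by (simp add: sum.delta)
  qed
  then show ?thesis by simp
qed



lemma Qset_iff: "\<kappa> \<in> Qset S \<longleftrightarrow> S = {i. \<kappa> i \<noteq> 0}"
  unfolding Qset_def by auto

lemma masked_prod:
  "(\<Prod>i\<in>UNIV. (masked x' b T $ i - b $ i) ^ \<kappa> i) =
     pi_mon b x' \<kappa> * (if {i. \<kappa> i \<noteq> 0} \<subseteq> T then 1 else 0)"
proof (cases "{i. \<kappa> i \<noteq> 0} \<subseteq> T")
  case True
  show ?thesis
  proof -
    have "(masked x' b T $ i - b $ i) ^ \<kappa> i = (x' $ i - b $ i) ^ \<kappa> i" for i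
      using True by (cases "\<kappa> i = 0") (auto simp: masked_def)
    then show ?thesis using True by (simp add: pi_mon_def)
  qed
next
  case False
  then obtain j where j: "\<kappa> j \<noteq> 0" "j \<notin> T" by auto
  have "(\<Prod>i\<in>UNIV. (masked x' b T $ i - b $ i) ^ \<kappa> i) = 0"
    by (rule prod_zero) (use j in \<open>auto simp: masked_def intro!: bexI[of _ j]\<close>)
  then show ?thesis using False by simp
qed

lemma part1:
  fixes v :: "real^'n::finite \<Rightarrow> real"
  assumes taylor: "\<forall>z. ((\<lambda>kappa. Ccoef kappa * nabla v b kappa
                          * (\<Prod>i\<in>UNIV. (z $ i - b $ i) ^ kappa i)) has_sum v z) UNIV"
  shows "((\<lambda>\<kappa>. Ccoef \<kappa> * nabla v b \<kappa> * pi_mon b x' \<kappa>) has_sum harsanyi v b x' S) (Qset S)"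
proof -
  define f where "f \<kappa> = Ccoef \<kappa> * nabla v b \<kappa> * pi_mon b x' \<kappa>" for \<kappa>
  define ind where "ind T \<kappa> = (if {i. \<kappa> i \<noteq> 0} \<subseteq> T then 1 else (0::real))" for T and \<kappa> :: "'n \<Rightarrow> nat"
  have hT: "((\<lambda>\<kappa>. f \<kappa> * ind T \<kappa>) has_sum v (masked x' b T)) UNIV" for T
    using taylor[rule_format, of "masked x' b T"]
    by (simp add: masked_prod f_def ind_def mult.assoc)
  have "((\<lambda>\<kappa>. \<Sum>T\<in>Pow S. (-1) ^ (card S - card T) * (f \<kappa> * ind T \<kappa>)) has_sum
          (\<Sum>T\<in>Pow S. (-1) ^ (card S - card T) * v (masked x' b T))) UNIV"
    by (rule has_sum_sum_fin) (auto intro: has_sum_cmult_right hT)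
  moreover have "(\<Sum>T\<in>Pow S. (-1) ^ (card S - card T) * (f \<kappa> * ind T \<kappa>)) =
      (if \<kappa> \<in> Qset S then f \<kappa> else 0)" for \<kappa>
  proof -
    have "(\<Sum>T\<in>Pow S. (-1) ^ (card S - card T) * (f \<kappa> * ind T \<kappa>)) =
        f \<kappa> * (\<Sum>T\<in>Pow S. (-1) ^ (card S - card T) * ind T \<kappa>)"
      by (simp add: sum_distrib_left mult_ac)
    also have "\<dots> = f \<kappa> * (if S = {i. \<kappa> i \<noteq> 0} then 1 else 0)"
      unfolding ind_def by (subst mobius_indicator) auto
    finally show ?thesis by (simp add: Qset_iff)
  qed
  ultimately have "((\<lambda>\<kappa>. if \<kappa> \<in> Qset S then f \<kappa> else 0) has_sum harsanyi v b x' S) UNIV"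
    by (simp add: harsanyi_def)
  then show ?thesis
    unfolding f_def[symmetric]
    by (rule has_sum_cong_neutral[THEN iffD1, rotated -1]) auto
qed



lemma Basis_vec_axis: "(Basis :: (real^'n::finite) set) = range (\<lambda>i. axis i 1)"
  by (auto simp: Basis_vec_def)

lemma sum_basis_nth:
  fixes f :: "(real^'n::finite) \<Rightarrow> real"
  shows "(\<Sum>b\<in>Basis. f b *\<^sub>R b) $ i = f (axis i 1)"
proof -
  have "(\<Sum>b\<in>Basis. f b *\<^sub>R b) = (\<chi> i. f (axis i 1))"
    by (rule vector_cart[symmetric]) 
  then show ?thesis by simp
qed

lemma prod_integral_vec:
  fixes g :: "'n::finite \<Rightarrow> real \<Rightarrow> real"
  assumes int: "\<And>i. integrable lborel (g i)" and meas: "\<And>i. g i \<in> borel_measurable borel"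
  shows "(LINT e|lborel. (\<Prod>i\<in>UNIV. g i (e $ i))) = (\<Prod>i\<in>UNIV. LINT t|lborel. g i t)"
proof -
  let ?T = "\<lambda>f. \<Sum>b\<in>(Basis :: (real^'n) set). f b *\<^sub>R b"
  let ?M = "\<Pi>\<^sub>M b\<in>(Basis :: (real^'n) set). (lborel :: real measure)"
  define h where "h b = g (SOME i. axis i 1 = b)" for b :: "real^'n"
  have inj: "inj (\<lambda>i::'n. axis i (1::real))"
    by (auto simp: inj_def axis_eq_axis)
  have hax: "h (axis i 1) = g i" for i
    unfolding h_def by (rule arg_cong[where f=g]) (use inj in \<open>auto simp: inj_def intro!: some_equality\<close>)
  have meas_g: "(\<lambda>e::real^'n. \<Prod>i\<in>UNIV. g i (e $ i)) \<in> borel_measurable borel"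
    using meas by measurable
  have "(LINT e|lborel. (\<Prod>i\<in>UNIV. g i (e $ i))) = (LINT e|distr ?M borel ?T. (\<Prod>i\<in>UNIV. g i (e $ i)))"
    by (subst lborel_eq) rule
  also have "\<dots> = (LINT f|?M. (\<Prod>i\<in>UNIV. g i (?T f $ i)))"
    by (rule integral_distr) (auto intro: meas_g)
  also have "\<dots> = (LINT f|?M. (\<Prod>b\<in>Basis. h b (f b)))"
  proof (rule Bochner_Integration.integral_cong[OF refl])
    fix f :: "real^'n \<Rightarrow> real"
    have "(\<Prod>i\<in>UNIV. g i (?T f $ i)) = (\<Prod>i\<in>UNIV. h (axis i 1) (f (axis i 1)))"
      by (simp only: sum_basis_nth hax)
    also have "\<dots> = (\<Prod>b\<in>Basis. h b (f b))"
      unfolding Basis_vec_axis by (subst prod.reindex[OF inj]) simp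
    finally show "(\<Prod>i\<in>UNIV. g i (?T f $ i)) = (\<Prod>b\<in>Basis. h b (f b))" .
  qed
  also have "\<dots> = (\<Prod>b\<in>Basis. LINT t|lborel. h b t)"
  proof -
    interpret product_sigma_finite "\<lambda>_::real^'n. lborel :: real measure"
      by standard
    show ?thesis
      by (rule product_integral_prod) (auto simp: Basis_vec_axis hax int)
  qed
  also have "\<dots> = (\<Prod>i\<in>UNIV. LINT t|lborel. g i t)"
    unfolding Basis_vec_axis by (subst prod.reindex[OF inj]) (simp add: hax)
  finally show ?thesis .
qed



lemma gm_odd: "delta > 0 \<Longrightarrow> gauss_moment delta (2*m+1) = 0"
  unfolding gauss_moment_def using integral_normal_moment_odd[of delta 0 m] by simp

lemma gm_even: "delta > 0 \<Longrightarrow> gauss_moment delta (2*m) = fact (2*m) / (2^m * fact m) * delta^(2*m)"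
proof -
  assume d: "delta > 0"
  have "gauss_moment delta (2*m) = fact (2*m) / ((2/delta\<^sup>2)^m * fact m)"
    unfolding gauss_moment_def using integral_normal_moment_even[OF d, of 0 m] by simp
  also have "(2/delta\<^sup>2)^m = 2^m / delta^(2*m)"
    by (simp add: power_divide power_mult)
  finally show ?thesis using d by (simp add: field_simps)
qed

lemma gm_pos: "delta > 0 \<Longrightarrow> gauss_moment delta (2*m) > 0"
  by (simp add: gm_even)

lemma gm_int: "delta > 0 \<Longrightarrow> integrable lborel (\<lambda>t. normal_density 0 delta t * t ^ j)"
  using integrable_normal_moment[of delta 0 j] by simp

lemma A_expand:
  assumes d: "delta > 0"
  shows "integrable lborel (\<lambda>t. normal_density 0 delta t * (1 + c*t)^k)"
    and "(LINT t|lborel. normal_density 0 delta t * (1 + c*t)^k) =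
         (\<Sum>j\<le>k. real (k choose j) * c^j * gauss_moment delta j)"
proof -
  have eq: "(\<lambda>t. normal_density 0 delta t * (1 + c*t)^k) =
        (\<lambda>t. \<Sum>j\<le>k. (real (k choose j) * c^j) * (normal_density 0 delta t * t^j))"
  proof
    fix t
    have "(1 + c*t)^k = (c*t + 1)^k" by (simp add: add.commute)
    also have "\<dots> = (\<Sum>j\<le>k. real (k choose j) * (c*t)^j * 1^(k-j))"
      by (rule binomial_ring)
    finally show "normal_density 0 delta t * (1 + c*t)^k =
        (\<Sum>j\<le>k. (real (k choose j) * c^j) * (normal_density 0 delta t * t^j))"
      by (simp add: sum_distrib_left power_mult_distrib mult_ac)
  qed
  show "integrable lborel (\<lambda>t. normal_density 0 delta t * (1 + c*t)^k)"
    unfolding eq by (rule Bochner_Integration.integrable_sum, rule Bochner_Integration.integrable_mult_right, rule gm_int[OF d])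
  show "(LINT t|lborel. normal_density 0 delta t * (1 + c*t)^k) =
         (\<Sum>j\<le>k. real (k choose j) * c^j * gauss_moment delta j)"
    unfolding eq gauss_moment_def
    apply (subst Bochner_Integration.integral_sum)
    apply (rule Bochner_Integration.integrable_mult_right, rule gm_int[OF d])
    apply simp
    done
qed



lemma sum_even_only:
  fixes f :: "nat \<Rightarrow> real"
  assumes "\<And>j. odd j \<Longrightarrow> f j = 0"
  shows "(\<Sum>j\<le>2*k. f j) = (\<Sum>m\<le>k. f (2*m))"
proof (induction k)
  case 0
  then show ?case by simp
next
  case (Suc k)
  have "2 * Suc k = Suc (Suc (2*k))" by simp
  then show ?case using Suc assms[of "Suc (2*k)"] by simp
qed

lemma A_sq:
  assumes d: "delta > 0" and s: "s = 1 \<or> s = -1" and tau: "tau > 0"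
  shows "(LINT t|lborel. normal_density 0 delta t * (1 + (s/tau)*t)^(2*k)) =
     1 + (\<Sum>m=1..k. (real ((2 * k) choose (2 * m)) / tau ^ (2 * m)) * gauss_moment delta (2 * m))"
proof -
  have "(LINT t|lborel. normal_density 0 delta t * (1 + (s/tau)*t)^(2*k)) =
     (\<Sum>j\<le>2*k. real ((2*k) choose j) * (s/tau)^j * gauss_moment delta j)"
    by (rule A_expand(2)[OF d])
  also have "\<dots> = (\<Sum>m\<le>k. real ((2*k) choose (2*m)) * (s/tau)^(2*m) * gauss_moment delta (2*m))"
  proof (rule sum_even_only)
    fix j :: nat assume "odd j"
    then obtain b where "j = 2*b+1" by (elim oddE)
    then show "real ((2*k) choose j) * (s/tau)^j * gauss_moment delta j = 0"
      using gm_odd[OF d, of b] by simp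
  qed
  also have "\<dots> = (\<Sum>m\<le>k. (real ((2 * k) choose (2 * m)) / tau ^ (2 * m)) * gauss_moment delta (2 * m))"
  proof (rule sum.cong[OF refl])
    fix m
    have "(s/tau)^(2*m) = 1 / tau^(2*m)"
      using s by (auto simp: power_mult power_divide)
    then show "real ((2*k) choose (2*m)) * (s/tau)^(2*m) * gauss_moment delta (2*m) =
      (real ((2 * k) choose (2 * m)) / tau ^ (2 * m)) * gauss_moment delta (2 * m)" by simp
  qed
  also have "\<dots> = 1 + (\<Sum>m=1..k. (real ((2 * k) choose (2 * m)) / tau ^ (2 * m)) * gauss_moment delta (2 * m))"
  proof -
    have g0: "gauss_moment delta 0 = 1" unfolding gauss_moment_def using d by simp
    have "{..k} = insert 0 {1..k}" by auto
    then show ?thesis by (simp add: g0)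
  qed
  finally show ?thesis .
qed

lemma cmult_bigo: "f \<in> O[F](g) \<Longrightarrow> (\<lambda>x. c * f x) \<in> O[F](g)"
  by (cases "c = 0") simp_all

lemma pow_bigo: "2 \<le> j \<Longrightarrow> (\<lambda>d::real. d^j) \<in> O[at_right 0](\<lambda>d. d^2)"
proof (rule bigoI[of _ 1])
  assume j: "2 \<le> j"
  have "eventually (\<lambda>d::real. 0 < d \<and> d < 1) (at_right 0)"
    unfolding eventually_at_right_field by (intro exI[of _ 1]) auto
  then show "eventually (\<lambda>d::real. norm (d^j) \<le> 1 * norm (d^2)) (at_right 0)"
    by eventually_elim (use j in \<open>auto simp: power_decreasing\<close>)
qed

lemma gm_bigo: "1 \<le> j \<Longrightarrow> (\<lambda>d. gauss_moment d j) \<in> O[at_right 0](\<lambda>d. d^2)"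
proof -
  assume j: "1 \<le> j"
  show ?thesis
  proof (cases "even j")
    case True
    then obtain m where m: "j = 2*m" by (elim evenE)
    with j have "2 \<le> j" by simp
    have "eventually (\<lambda>d. gauss_moment d j = fact (2*m) / (2^m * fact m) * d^j) (at_right 0)"
      using eventually_at_right_less[of "0::real"] by eventually_elim (simp add: m gm_even)
    moreover have "(\<lambda>d. fact (2*m) / (2^m * fact m) * d^j :: real) \<in> O[at_right 0](\<lambda>d. d^2)"
      by (rule cmult_bigo, rule pow_bigo) fact
    ultimately show ?thesis by (subst landau_o.big.in_cong) 
  next
    case False
    then obtain m where m: "j = 2*m+1" by (elim oddE)
    have "eventually (\<lambda>d. gauss_moment d j = 0) (at_right 0)"
      using eventually_at_right_less[of "0::real"] by eventually_elim (use gm_odd[of _ m] in \<open>simp add: m\<close>)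
    from landau_o.big.in_cong[OF this, of "\<lambda>d. d^2"] show ?thesis by simp
  qed
qed

lemma A_bigo:
  "(\<lambda>d. (LINT t|lborel. normal_density 0 d t * (1 + c*t)^k) - 1) \<in> O[at_right 0](\<lambda>d. d^2)"
proof -
  have "eventually (\<lambda>d. (LINT t|lborel. normal_density 0 d t * (1 + c*t)^k) - 1 =
          (\<Sum>j\<in>{1..k}. real (k choose j) * c^j * gauss_moment d j)) (at_right 0)"
    using eventually_at_right_less[of "0::real"]
  proof eventually_elim
    case (elim d)
    have g0: "gauss_moment d 0 = 1" unfolding gauss_moment_def using elim by simp
    have "{..k} = insert 0 {1..k}" by auto
    then show ?case using A_expand(2)[OF elim, of c k] by (simp add: g0)
  qed
  moreover have "(\<lambda>d. \<Sum>j\<in>{1..k}. real (k choose j) * c^j * gauss_moment d j) \<in> O[at_right 0](\<lambda>d. d^2)"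
    by (rule big_sum_in_bigo, rule cmult_bigo, rule gm_bigo) simp
  ultimately show ?thesis by (subst landau_o.big.in_cong)
qed



lemma prod_bigo:
  fixes a :: "'i \<Rightarrow> real \<Rightarrow> real"
  assumes "finite I" "\<And>i. i \<in> I \<Longrightarrow> (\<lambda>d. a i d - 1) \<in> O[at_right 0](\<lambda>d. d^2)"
  shows "(\<lambda>d. (\<Prod>i\<in>I. a i d) - 1) \<in> O[at_right 0](\<lambda>d. d^2)"
  using assms
proof (induction I rule: finite_induct)
  case empty
  then show ?case by simp
next
  case (insert j F)
  have IH: "(\<lambda>d. (\<Prod>i\<in>F. a i d) - 1) \<in> O[at_right 0](\<lambda>d. d^2)"
    using insert by auto
  have sq1: "(\<lambda>d::real. d^2) \<in> O[at_right 0](\<lambda>_. 1)"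
  proof (rule bigoI[of _ 1])
    have "eventually (\<lambda>d::real. 0 < d \<and> d < 1) (at_right 0)"
      unfolding eventually_at_right_field by (intro exI[of _ 1]) auto
    then show "eventually (\<lambda>d::real. norm (d^2) \<le> 1 * norm (1::real)) (at_right 0)"
      by eventually_elim (auto simp: power_le_one)
  qed
  have "(\<lambda>d. ((\<Prod>i\<in>F. a i d) - 1) + 1) \<in> O[at_right 0](\<lambda>_. 1)"
    by (rule sum_in_bigo(1), rule landau_o.big_trans[OF IH sq1]) simp
  then have PF: "(\<lambda>d. \<Prod>i\<in>F. a i d) \<in> O[at_right 0](\<lambda>_. 1)" by simp
  have "(\<lambda>d. (a j d - 1) * (\<Prod>i\<in>F. a i d)) \<in> O[at_right 0](\<lambda>d. d^2 * 1)"
    by (rule landau_o.big.mult) (use insert PF in auto)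
  then have T1: "(\<lambda>d. (a j d - 1) * (\<Prod>i\<in>F. a i d)) \<in> O[at_right 0](\<lambda>d. d^2)" by simp
  have "(\<lambda>d. (a j d - 1) * (\<Prod>i\<in>F. a i d) + ((\<Prod>i\<in>F. a i d) - 1)) \<in> O[at_right 0](\<lambda>d. d^2)"
    by (rule sum_in_bigo(1)[OF T1 IH])
  moreover have "(\<lambda>d. (\<Prod>i\<in>insert j F. a i d) - 1) = (\<lambda>d. (a j d - 1) * (\<Prod>i\<in>F. a i d) + ((\<Prod>i\<in>F. a i d) - 1))"
    by (rule ext) (use insert in \<open>simp add: algebra_simps\<close>)
  ultimately show ?case by (simp only:)
qed

lemma ge_prod:
  fixes c :: "'n::finite \<Rightarrow> real"
  assumes d: "delta > 0"
  shows "gauss_expect delta (\<lambda>e::real^'n. \<Prod>i\<in>UNIV. (1 + c i * e$i)^(k i)) =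
    (\<Prod>i\<in>UNIV. LINT t|lborel. normal_density 0 delta t * (1 + c i * t)^(k i))"
proof -
  have "gauss_expect delta (\<lambda>e::real^'n. \<Prod>i\<in>UNIV. (1 + c i * e$i)^(k i)) =
     (LINT e|lborel. (\<Prod>i\<in>UNIV. (\<lambda>i t. normal_density 0 delta t * (1 + c i * t)^(k i)) i (e $ i)))"
    unfolding gauss_expect_def by (simp add: prod.distrib)
  also have "\<dots> = (\<Prod>i\<in>UNIV. LINT t|lborel. normal_density 0 delta t * (1 + c i * t)^(k i))"
    by (rule prod_integral_vec) (auto intro: A_expand(1)[OF d])
  finally show ?thesis .
qed



lemma sgn_fact:
  assumes tau: "tau > 0"
  shows "x $ i - baseline x mu tau $ i = sgn (x $ i - baseline x mu tau $ i) * tau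
     \<and> (sgn (x $ i - baseline x mu tau $ i) = 1 \<or> sgn (x $ i - baseline x mu tau $ i) = -1)"
  using tau by (auto simp: baseline_def)

lemma pihat_eq:
  assumes tau: "tau > 0"
  shows "pihat x (baseline x mu tau) tau (x + e) \<kappa> =
    (\<Prod>i\<in>UNIV. (1 + (sgn (x $ i - baseline x mu tau $ i) / tau) * e $ i) ^ \<kappa> i)"
proof -
  let ?b = "baseline x mu tau"
  have "(sgn (x $ i - ?b $ i) / tau) ^ \<kappa> i * ((x + e) $ i - ?b $ i) ^ \<kappa> i =
        (1 + (sgn (x $ i - ?b $ i) / tau) * e $ i) ^ \<kappa> i" for i
  proof -
    obtain s where s: "s = sgn (x $ i - ?b $ i)" by simp
    have h: "x $ i - ?b $ i = s * tau" "s = 1 \<or> s = -1" using sgn_fact[OF tau, where x=x and mu=mu and i=i] s by auto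
    have "(s / tau) * ((x + e) $ i - ?b $ i) = 1 + (s/tau) * e $ i"
      using h tau by (auto simp: field_simps)
    then show ?thesis unfolding s[symmetric] by (simp add: power_mult_distrib[symmetric])
  qed
  then show ?thesis unfolding pihat_def pi_mon_def by (simp add: prod.distrib[symmetric])
qed

theorem theorem1:
  fixes v :: "real^'n::finite \<Rightarrow> real"
    and x mu eps :: "real^'n"
    and tau :: real
    and S :: "'n set"
  assumes neq: "\<forall>i. x $ i \<noteq> mu $ i"
    and tau_pos: "tau > 0"
    and taylor: "\<forall>z. ((\<lambda>kappa. Ccoef kappa * nabla v (baseline x mu tau) kappa
                          * (\<Prod>i\<in>UNIV. (z $ i - baseline x mu tau $ i) ^ kappa i))
                      has_sum v z) UNIV"
  shows
    "((\<lambda>kappa. Ccoef kappa * nabla v (baseline x mu tau) kappa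
                 * pi_mon (baseline x mu tau) (x + eps) kappa)
        has_sum harsanyi v (baseline x mu tau) (x + eps) S) (Qset S)
   \<and> ((\<lambda>kappa. Zcoef v x (baseline x mu tau) tau kappa
                 * pihat x (baseline x mu tau) tau (x + eps) kappa)
        has_sum harsanyi v (baseline x mu tau) (x + eps) S) (Qset S)
   \<and> (\<forall>kappa\<in>Qset S.
        (\<lambda>delta. gauss_expect delta (\<lambda>e. pihat x (baseline x mu tau) tau (x + e) kappa) - 1)
          \<in> O[at_right 0](\<lambda>delta. delta ^ 2))
   \<and> (\<forall>delta>0. \<forall>kappa\<in>Qset S.
        gauss_expect delta (\<lambda>e. (pihat x (baseline x mu tau) tau (x + e) kappa) ^ 2)
          = (\<Prod>i\<in>S. 1 + (\<Sum>m=1..kappa i.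
                 (real ((2 * kappa i) choose (2 * m)) / tau ^ (2 * m)) * gauss_moment delta (2 * m)))
        \<and> (\<forall>i\<in>S. \<forall>m\<in>{1..kappa i}.
              gauss_moment delta (2 * m) > 0
              \<and> real ((2 * kappa i) choose (2 * m)) / tau ^ (2 * m) > 0))"
proof -
  let ?b = "baseline x mu tau"
  define c where "c i = sgn (x $ i - ?b $ i) / tau" for i
  have cs: "c i = 1/tau \<or> c i = -1/tau" for i
    using sgn_fact[OF tau_pos, where x=x and mu=mu and i=i] by (auto simp: c_def)
  have P1: "((\<lambda>kappa. Ccoef kappa * nabla v ?b kappa * pi_mon ?b (x + eps) kappa)
        has_sum harsanyi v ?b (x + eps) S) (Qset S)"
    by (rule part1[OF taylor])
  have P2: "((\<lambda>kappa. Zcoef v x ?b tau kappa * pihat x ?b tau (x + eps) kappa)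
        has_sum harsanyi v ?b (x + eps) S) (Qset S)"
  proof -
    have "Zcoef v x ?b tau kappa * pihat x ?b tau (x + eps) kappa =
          Ccoef kappa * nabla v ?b kappa * pi_mon ?b (x + eps) kappa" for kappa
    proof -
      have "(\<Prod>i\<in>UNIV. (tau / sgn (x $ i - ?b $ i)) ^ kappa i) * (\<Prod>i\<in>UNIV. (sgn (x $ i - ?b $ i) / tau) ^ kappa i) = 1"
      proof -
        have "(tau / sgn (x $ i - ?b $ i)) ^ kappa i * (sgn (x $ i - ?b $ i) / tau) ^ kappa i = 1" for i
          using sgn_fact[OF tau_pos, where x=x and mu=mu and i=i] tau_pos by (auto simp: power_mult_distrib[symmetric])
        then show ?thesis by (simp add: prod.distrib[symmetric])
      qed
      then show ?thesis unfolding Zcoef_def pihat_def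
        by (metis (no_types, lifting) mult.assoc mult.commute mult.left_neutral)
    qed
    then show ?thesis using P1 by simp
  qed
  have P3: "\<forall>kappa\<in>Qset S.
        (\<lambda>delta. gauss_expect delta (\<lambda>e. pihat x ?b tau (x + e) kappa) - 1)
          \<in> O[at_right 0](\<lambda>delta. delta ^ 2)"
  proof
    fix kappa assume "kappa \<in> Qset S"
    have ev: "eventually (\<lambda>delta. gauss_expect delta (\<lambda>e. pihat x ?b tau (x + e) kappa) - 1 =
        (\<Prod>i\<in>UNIV. LINT t|lborel. normal_density 0 delta t * (1 + c i * t)^(kappa i)) - 1) (at_right 0)"
      using eventually_at_right_less[of "0::real"]
    proof eventually_elim
      case (elim d)
      show ?case unfolding pihat_eq[OF tau_pos] c_def[symmetric] using ge_prod[OF elim] by simp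
    qed
    have "(\<lambda>delta. (\<Prod>i\<in>UNIV. LINT t|lborel. normal_density 0 delta t * (1 + c i * t)^(kappa i)) - 1)
          \<in> O[at_right 0](\<lambda>delta. delta ^ 2)"
      by (rule prod_bigo) (auto intro: A_bigo)
    then show "(\<lambda>delta. gauss_expect delta (\<lambda>e. pihat x ?b tau (x + e) kappa) - 1)
          \<in> O[at_right 0](\<lambda>delta. delta ^ 2)"
      using landau_o.big.in_cong[OF ev] by simp
  qed
  have P4: "\<forall>delta>0. \<forall>kappa\<in>Qset S.
        gauss_expect delta (\<lambda>e. (pihat x ?b tau (x + e) kappa) ^ 2)
          = (\<Prod>i\<in>S. 1 + (\<Sum>m=1..kappa i.
                 (real ((2 * kappa i) choose (2 * m)) / tau ^ (2 * m)) * gauss_moment delta (2 * m)))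
        \<and> (\<forall>i\<in>S. \<forall>m\<in>{1..kappa i}.
              gauss_moment delta (2 * m) > 0
              \<and> real ((2 * kappa i) choose (2 * m)) / tau ^ (2 * m) > 0)"
  proof (intro allI impI ballI conjI)
    fix delta :: real and kappa assume d: "delta > 0" and kq: "kappa \<in> Qset S"
    let ?F = "\<lambda>i. 1 + (\<Sum>m=1..kappa i.
                 (real ((2 * kappa i) choose (2 * m)) / tau ^ (2 * m)) * gauss_moment delta (2 * m))"
    have "(\<lambda>e. (pihat x ?b tau (x + e) kappa) ^ 2) = (\<lambda>e. \<Prod>i\<in>UNIV. (1 + c i * e$i)^(2 * kappa i))"
      unfolding pihat_eq[OF tau_pos] c_def[symmetric]
      by (simp add: prod_power_distrib power_mult mult.commute)
    then have "gauss_expect delta (\<lambda>e. (pihat x ?b tau (x + e) kappa) ^ 2) =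
        (\<Prod>i\<in>UNIV. LINT t|lborel. normal_density 0 delta t * (1 + c i * t)^(2 * kappa i))"
      using ge_prod[OF d] by simp
    also have "\<dots> = (\<Prod>i\<in>UNIV. ?F i)"
    proof (rule prod.cong[OF refl])
      fix i
      have "c i = sgn (x $ i - ?b $ i) / tau" by (simp add: c_def)
      moreover have "sgn (x $ i - ?b $ i) = 1 \<or> sgn (x $ i - ?b $ i) = -1"
        using sgn_fact[OF tau_pos, where x=x and mu=mu and i=i] by auto
      ultimately show "(LINT t|lborel. normal_density 0 delta t * (1 + c i * t)^(2 * kappa i)) = ?F i"
        using A_sq[OF d _ tau_pos, of "sgn (x $ i - ?b $ i)" "kappa i"] by simp
    qed
    also have "\<dots> = (\<Prod>i\<in>S. ?F i)"
    proof (rule prod.mono_neutral_right)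
      show "\<forall>i\<in>UNIV - S. ?F i = 1" using kq by (auto simp: Qset_def)
    qed auto
    finally show "gauss_expect delta (\<lambda>e. (pihat x ?b tau (x + e) kappa) ^ 2) = (\<Prod>i\<in>S. ?F i)" .
  next
    fix delta :: real and kappa :: "'n \<Rightarrow> nat" and i :: 'n and m :: nat assume d: "delta > 0" and "m \<in> {1..kappa i}"
    then show "gauss_moment delta (2 * m) > 0" by (simp add: gm_pos)
  next
    fix delta :: real and kappa :: "'n \<Rightarrow> nat" and i :: 'n and m :: nat assume d: "delta > 0" and m: "m \<in> {1..kappa i}"
    then show "real ((2 * kappa i) choose (2 * m)) / tau ^ (2 * m) > 0"
      using tau_pos by (auto intro!: divide_pos_pos zero_less_binomial)
  qed
  show ?thesis using P1 P2 P3 P4 by blast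
qed

end
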